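(* Let $A=(A_1,A_2)\in SL(2,\mathbb{C})^{\times2}$ satisfy $\sigma_{12}\neq0$. If $\nu_1\neq0$, then $A$ is conjugate (by a common element) to a pair $B=(B_1,B_2)$ of the form $B_1=\begin{pmatrix}\alpha_1+i\beta_1&0\\0&\alpha_1-i\beta_1\end{pmatrix}$, $B_2=\begin{pmatrix}\alpha_2+i\beta_2&i\delta_2\\i\delta_2&\alpha_2-i\beta_2\end{pmatrix}$ with $\alpha_1^2+\beta_1^2=1$, $\alpha_2^2+\beta_2^2+\delta_2^2=1$ and $\delta_2^2=\frac{\sigma_{12}}{2\nu_1}\neq0$. If $\nu_1=0$ and $\nu_2\neq0$, the same holds with the roles of $B_1$ and $B_2$ (and of the indices $1,2$) switched. If $\nu_1=\nu_2=0$, then $A$ is conjugate to a pair $B=(B_1,B_2)$ of the form $B_1=\begin{pmatrix}\alpha_1+\lambda&i\lambda\\i\lambda&\alpha_1-\lambda\end{pmatrix}$, $B_2=\begin{pmatrix}\alpha_2-\lambda&i\lambda\\i\lambda&\alpha_2+\lambda\end{pmatrix}$ with $\alpha_1^2=\alpha_2^2=1$ and $\lambda^4=\frac{\sigma_{12}}{16}\neq0$.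
   Context: All parameters are complex. $\sigma_{12}=\mathsf{tr}(A_1A_2A_1^{-1}A_2^{-1})-2$ and $\nu_j=\frac{(\mathsf{tr}A_j)^2}{2}-2$. *)

theory Defs
  imports "HOL-Analysis.Analysis"
begin

type_synonym cmat2 = "complex^2^2"

definition mat2 :: "complex \<Rightarrow> complex \<Rightarrow> complex \<Rightarrow> complex \<Rightarrow> cmat2" where
  "mat2 a b c d = vector [vector [a, b], vector [c, d]]"

definition SL2 :: "cmat2 \<Rightarrow> bool" where
  "SL2 A \<longleftrightarrow> det A = 1"

definition sigma12 :: "cmat2 \<Rightarrow> cmat2 \<Rightarrow> complex" where
  "sigma12 A1 A2 = trace (A1 ** A2 ** matrix_inv A1 ** matrix_inv A2) - 2"

definition nu :: "cmat2 \<Rightarrow> complex" where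
  "nu A = (trace A)\<^sup>2 / 2 - 2"

definition conj_pair :: "cmat2 \<Rightarrow> cmat2 \<Rightarrow> cmat2 \<Rightarrow> cmat2 \<Rightarrow> bool" where
  "conj_pair A1 A2 B1 B2 \<longleftrightarrow>
     (\<exists>G. SL2 G \<and> B1 = G ** A1 ** matrix_inv G \<and> B2 = G ** A2 ** matrix_inv G)"

end

theory Submission imports Defs begin

lemma mat2_nth[simp]:
  "mat2 a b c d $ 1 $ 1 = a" "mat2 a b c d $ 1 $ 2 = b"
  "mat2 a b c d $ 2 $ 1 = c" "mat2 a b c d $ 2 $ 2 = d"
  by (simp_all add: mat2_def)

lemma mat2_eta: "(M::cmat2) = mat2 (M$1$1) (M$1$2) (M$2$1) (M$2$2)"
  by (simp add: vec_eq_iff forall_2)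

lemma mat2_eq_iff: "mat2 a b c d = mat2 a' b' c' d' \<longleftrightarrow> a = a' \<and> b = b' \<and> c = c' \<and> d = d'"
  by (metis mat2_nth)

lemma mat2_eqI: "a = a' \<Longrightarrow> b = b' \<Longrightarrow> c = c' \<Longrightarrow> d = d' \<Longrightarrow> mat2 a b c d = mat2 a' b' c' d'"
  by simp

lemma mat2_mult: "mat2 a b c d ** mat2 e f g h = mat2 (a*e+b*g) (a*f+b*h) (c*e+d*g) (c*f+d*h)"
  by (simp add: vec_eq_iff forall_2 matrix_matrix_mult_def sum_2)

lemma mat2_one: "(mat 1 :: cmat2) = mat2 1 0 0 1"
  by (simp add: vec_eq_iff forall_2 mat_def)

lemma det_mat2: "det (mat2 a b c d) = a*d - b*c"
  by (simp add: det_2)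

lemma trace_mat2: "trace (mat2 a b c d) = a + d"
  by (simp add: trace_def sum_2)

lemma matrix_inv_unique:
  fixes A B :: cmat2
  assumes "A ** B = mat 1" "B ** A = mat 1"
  shows "matrix_inv A = B"
proof -
  have ex: "\<exists>A'. A ** A' = mat 1 \<and> A' ** A = mat 1" using assms by blast
  define C where "C = matrix_inv A"
  have C: "A ** C = mat 1 \<and> C ** A = mat 1"
    unfolding C_def matrix_inv_def using someI_ex[OF ex] by simp
  have "C = C ** (A ** B)" using assms by (simp add: matrix_mul_rid)
  also have "\<dots> = (C ** A) ** B" by (simp add: matrix_mul_assoc)
  also have "\<dots> = B" using C by (simp add: matrix_mul_lid)
  finally show ?thesis unfolding C_def .
qed

lemma matrix_inv_mat2:
  assumes "a*d - b*c = 1"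
  shows "matrix_inv (mat2 a b c d) = mat2 d (-b) (-c) a"
  apply (rule matrix_inv_unique)
  using assms by (auto simp: mat2_mult mat2_one mat2_eq_iff algebra_simps)

lemma sl2_inv:
  assumes "SL2 G"
  shows "G ** matrix_inv G = mat 1" "matrix_inv G ** G = mat 1"
proof -
  obtain a b c d where G: "G = mat2 a b c d" using mat2_eta by blast
  have d: "a*d - b*c = 1" using assms G by (simp add: SL2_def det_mat2)
  show "G ** matrix_inv G = mat 1" "matrix_inv G ** G = mat 1"
    unfolding G matrix_inv_mat2[OF d] mat2_one mat2_mult mat2_eq_iff
    using d by (simp_all add: algebra_simps)
qed

lemma conj_rel:
  assumes "SL2 G" "G ** A = B ** G"
  shows "B = G ** A ** matrix_inv G"
proof -
  have "B = B ** (G ** matrix_inv G)" using sl2_inv[OF assms(1)] by simp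
  also have "\<dots> = G ** A ** matrix_inv G" using assms(2) by (simp add: matrix_mul_assoc)
  finally show ?thesis .
qed

lemma conj_rel2:
  assumes "SL2 G" "B = G ** A ** matrix_inv G"
  shows "G ** A = B ** G"
proof -
  have "B ** G = G ** A ** (matrix_inv G ** G)" using assms(2) by (simp add: matrix_mul_assoc)
  then show ?thesis using sl2_inv[OF assms(1)] by simp
qed

lemma conj_pair_iff:
  "conj_pair A1 A2 B1 B2 \<longleftrightarrow> (\<exists>G. SL2 G \<and> G ** A1 = B1 ** G \<and> G ** A2 = B2 ** G)"
  unfolding conj_pair_def using conj_rel conj_rel2 by metis

lemma SL2_mult: "SL2 A \<Longrightarrow> SL2 B \<Longrightarrow> SL2 (A ** B)"
  by (simp add: SL2_def det_mul)

lemma conj_pair_trans: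
  assumes "conj_pair A1 A2 B1 B2" "conj_pair B1 B2 C1 C2"
  shows "conj_pair A1 A2 C1 C2"
proof -
  obtain G where G: "SL2 G" "G ** A1 = B1 ** G" "G ** A2 = B2 ** G"
    using assms(1) conj_pair_iff by blast
  obtain H where H: "SL2 H" "H ** B1 = C1 ** H" "H ** B2 = C2 ** H"
    using assms(2) conj_pair_iff by blast
  have "(H ** G) ** A1 = C1 ** (H ** G)" "(H ** G) ** A2 = C2 ** (H ** G)"
    using G H by (metis matrix_mul_assoc)+
  then show ?thesis unfolding conj_pair_iff using SL2_mult[OF H(1) G(1)] by blast
qed

lemma conj_pair_sym:
  assumes "conj_pair A1 A2 B1 B2"
  shows "conj_pair B1 B2 A1 A2"
proof -
  obtain G where G: "SL2 G" "G ** A1 = B1 ** G" "G ** A2 = B2 ** G"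
    using assms(1) conj_pair_iff by blast
  define Gi where "Gi = matrix_inv G"
  have i: "G ** Gi = mat 1" "Gi ** G = mat 1" using sl2_inv[OF G(1)] Gi_def by auto
  have "SL2 Gi" using i(1) G(1) by (metis SL2_def det_I det_mul mult_1)
  moreover have "Gi ** B1 = A1 ** Gi"
  proof -
    have "Gi ** B1 = Gi ** B1 ** (G ** Gi)" using i by simp
    also have "\<dots> = Gi ** (B1 ** G) ** Gi" by (simp add: matrix_mul_assoc)
    also have "\<dots> = A1 ** Gi" using G(2) i by (metis matrix_mul_assoc matrix_mul_lid)
    finally show ?thesis .
  qed
  moreover have "Gi ** B2 = A2 ** Gi"
  proof -
    have "Gi ** B2 = Gi ** B2 ** (G ** Gi)" using i by simp
    also have "\<dots> = Gi ** (B2 ** G) ** Gi" by (simp add: matrix_mul_assoc)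
    also have "\<dots> = A2 ** Gi" using G(3) i by (metis matrix_mul_assoc matrix_mul_lid)
    finally show ?thesis .
  qed
  ultimately show ?thesis unfolding conj_pair_iff by blast
qed

lemma conj_inv:
  assumes "SL2 G" "SL2 A"
  shows "matrix_inv (G ** A ** matrix_inv G) = G ** matrix_inv A ** matrix_inv G"
proof (rule matrix_inv_unique)
  note g = sl2_inv[OF assms(1)] and a = sl2_inv[OF assms(2)]
  have "G ** A ** matrix_inv G ** (G ** matrix_inv A ** matrix_inv G)
     = G ** (A ** ((matrix_inv G ** G) ** matrix_inv A)) ** matrix_inv G"
    by (simp only: matrix_mul_assoc)
  also have "\<dots> = mat 1" by (simp only: g a matrix_mul_lid matrix_mul_rid)
  finally show "G ** A ** matrix_inv G ** (G ** matrix_inv A ** matrix_inv G) = mat 1" .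
  have "G ** matrix_inv A ** matrix_inv G ** (G ** A ** matrix_inv G)
     = G ** (matrix_inv A ** ((matrix_inv G ** G) ** A)) ** matrix_inv G"
    by (simp only: matrix_mul_assoc)
  also have "\<dots> = mat 1" by (simp only: g a matrix_mul_lid matrix_mul_rid)
  finally show "G ** matrix_inv A ** matrix_inv G ** (G ** A ** matrix_inv G) = mat 1" .
qed

lemma trace_conj:
  assumes "SL2 G"
  shows "trace (G ** X ** matrix_inv G) = trace X"
proof -
  have "trace (G ** X ** matrix_inv G) = trace (matrix_inv G ** (G ** X))"
    by (rule trace_mul_sym)
  also have "\<dots> = trace ((matrix_inv G ** G) ** X)" by (simp only: matrix_mul_assoc)
  also have "\<dots> = trace X" by (simp only: sl2_inv[OF assms] matrix_mul_lid)
  finally show ?thesis .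
qed

lemma conj_invariants:
  assumes "conj_pair A1 A2 B1 B2" "SL2 A1" "SL2 A2"
  shows "sigma12 B1 B2 = sigma12 A1 A2" "nu B1 = nu A1" "nu B2 = nu A2" "SL2 B1" "SL2 B2"
proof -
  obtain G where G: "SL2 G" "B1 = G ** A1 ** matrix_inv G" "B2 = G ** A2 ** matrix_inv G"
    using assms(1) conj_pair_def by blast
  note g = sl2_inv[OF G(1)]
  have gg: "matrix_inv G ** (G ** X) = X" for X
    by (simp only: matrix_mul_assoc g matrix_mul_lid)
  show "nu B1 = nu A1" "nu B2 = nu A2" unfolding nu_def G(2,3) trace_conj[OF G(1)] by simp_all
  have dI: "det (matrix_inv G) = 1" using g(1) G(1) by (metis SL2_def det_I det_mul mult_1)
  show "SL2 B1" "SL2 B2" using assms(2,3) G dI by (simp_all add: SL2_def det_mul)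
  have "B1 ** B2 ** matrix_inv B1 ** matrix_inv B2
        = G ** (A1 ** A2 ** matrix_inv A1 ** matrix_inv A2) ** matrix_inv G"
    unfolding G(2,3) conj_inv[OF G(1) assms(2)] conj_inv[OF G(1) assms(3)]
    by (simp only: matrix_mul_assoc[symmetric] gg)
  then show "sigma12 B1 B2 = sigma12 A1 A2"
    unfolding sigma12_def using trace_conj[OF G(1)] by simp
qed


lemma sigma_mat2:
  assumes "a*d-b*c=1" "e*h-f*g=1"
  shows "sigma12 (mat2 a b c d) (mat2 e f g h) =
    trace (mat2 a b c d ** mat2 e f g h ** mat2 d (-b) (-c) a ** mat2 h (-f) (-g) e) - 2"
  unfolding sigma12_def matrix_inv_mat2[OF assms(1)] matrix_inv_mat2[OF assms(2)] ..

lemma sigma_sym: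
  assumes "SL2 A1" "SL2 A2"
  shows "sigma12 A2 A1 = sigma12 A1 A2"
proof -
  obtain a b c d where A: "A1 = mat2 a b c d" using mat2_eta by blast
  obtain e f g h where B: "A2 = mat2 e f g h" using mat2_eta by blast
  have d1: "a*d-b*c=1" using assms A by (simp add: SL2_def det_mat2)
  have d2: "e*h-f*g=1" using assms B by (simp add: SL2_def det_mat2)
  show ?thesis unfolding A B sigma_mat2[OF d1 d2] sigma_mat2[OF d2 d1]
    by (simp add: mat2_mult trace_mat2 algebra_simps)
qed

lemma diag:
  assumes "SL2 A" "nu A \<noteq> 0"
  shows "\<exists>G l m. SL2 G \<and> G ** A = mat2 l 0 0 m ** G \<and> l*m = 1 \<and> l \<noteq> m"
proof -
  obtain a b c d where A: "A = mat2 a b c d" using mat2_eta by blast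
  have d1: "a*d-b*c=1" using assms A by (simp add: SL2_def det_mat2)
  have t4: "(a+d)^2 \<noteq> 4" using assms(2) A by (auto simp: nu_def trace_mat2)
  show ?thesis
  proof (cases "c = 0")
    case True
    have ad: "a*d = 1" using d1 True by simp
    have ne: "a \<noteq> d" using t4 ad by (auto simp: power2_eq_square algebra_simps)
    define D where "D = -((a-d)^2)"
    have D: "D \<noteq> 0" using ne unfolding D_def by simp
    define G where "G = mat2 ((a-d)/D) (b/D) 0 (d-a)"
    have "SL2 G" unfolding G_def SL2_def det_mat2 using D by (simp add: D_def power2_eq_square field_simps)
    moreover have "G ** A = mat2 a 0 0 d ** G"
      unfolding G_def A mat2_mult mat2_eq_iff using True D
      by (simp add: field_simps)
    ultimately show ?thesis using ad ne by blast
  next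
    case False
    define r where "r = csqrt ((a+d)^2 - 4)"
    have r2: "r^2 = (a+d)^2 - 4" unfolding r_def by simp
    have r0: "r \<noteq> 0" using t4 r2 by auto
    define l where "l = (a+d+r)/2"
    define m where "m = (a+d-r)/2"
    have lm: "l*m = 1" unfolding l_def m_def using r2 by (simp add: field_simps power2_eq_square)
    have lmne: "l \<noteq> m" unfolding l_def m_def using r0 by auto
    have l2: "l*l = (a+d)*l - 1" unfolding l_def using r2 by (simp add: field_simps power2_eq_square) algebra
    have m2: "m*m = (a+d)*m - 1" unfolding m_def using r2 by (simp add: field_simps power2_eq_square) algebra
    define D where "D = c*(m-l)"
    have D: "D \<noteq> 0" using False lmne unfolding D_def by simp
    define G where "G = mat2 (c/D) ((l-a)/D) c (m-a)"
    have "c/D*(m-a) - (l-a)/D*c = (c*(m-a) - (l-a)*c)/D" by (simp add: diff_divide_distrib field_simps)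
    also have "\<dots> = D/D" by (simp add: D_def algebra_simps)
    also have "\<dots> = 1" using D by simp
    finally have "SL2 G" unfolding G_def SL2_def det_mat2 .
    moreover have "G ** A = mat2 l 0 0 m ** G"
    proof -
      have e1: "c*b + (l-a)*d = l*(l-a)" using l2 d1 by algebra
      have e2: "c*b + (m-a)*d = m*(m-a)" using m2 d1 by algebra
      show ?thesis unfolding G_def A mat2_mult mat2_eq_iff using D e1 e2
        by (simp add: field_simps)
    qed
    ultimately show ?thesis using lm lmne by blast
  qed
qed


lemma case1:
  assumes "SL2 A1" "SL2 A2" "sigma12 A1 A2 \<noteq> 0" "nu A1 \<noteq> 0"
  shows "\<exists>\<alpha>1 \<beta>1 \<alpha>2 \<beta>2 \<delta>2.
             conj_pair A1 A2
               (mat2 (\<alpha>1 + \<i> * \<beta>1) 0 0 (\<alpha>1 - \<i> * \<beta>1))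
               (mat2 (\<alpha>2 + \<i> * \<beta>2) (\<i> * \<delta>2) (\<i> * \<delta>2) (\<alpha>2 - \<i> * \<beta>2))
           \<and> \<alpha>1\<^sup>2 + \<beta>1\<^sup>2 = 1 \<and> \<alpha>2\<^sup>2 + \<beta>2\<^sup>2 + \<delta>2\<^sup>2 = 1
           \<and> \<delta>2\<^sup>2 = sigma12 A1 A2 / (2 * nu A1) \<and> \<delta>2\<^sup>2 \<noteq> 0"
proof -
  obtain G l m where G: "SL2 G" "G ** A1 = mat2 l 0 0 m ** G" "l*m = 1" "l \<noteq> m"
    using diag[OF assms(1,4)] by blast
  define B2 where "B2 = G ** A2 ** matrix_inv G"
  have cp1: "conj_pair A1 A2 (mat2 l 0 0 m) B2"
    unfolding conj_pair_iff using G conj_rel2[OF G(1) B2_def] by blast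
  note inv = conj_invariants[OF cp1 assms(1,2)]
  obtain e f g h where B2: "B2 = mat2 e f g h" using mat2_eta by blast
  have d2: "e*h - f*g = 1" using inv(5) B2 by (simp add: SL2_def det_mat2)
  have d1: "l*m - 0*0 = 1" using G(3) by simp
  have sig: "sigma12 A1 A2 = -(f*g)*(l-m)^2"
    using inv(1)[symmetric] unfolding B2 sigma_mat2[OF d1 d2]
    by (simp add: mat2_mult trace_mat2 power2_eq_square) (use G(3) d2 in algebra)
  have nu1: "nu A1 = (l-m)^2/2"
    using inv(2)[symmetric] G(3) by (simp add: nu_def trace_mat2 power2_eq_square field_simps)
  have fg: "f*g \<noteq> 0" using sig assms(3) by auto
  define t where "t = csqrt (csqrt (g/f))"
  have t4: "t^4 = g/f" unfolding t_def
    by (metis power2_csqrt power_mult num_double numeral_times_numeral mult_2_right)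
  have t0: "t \<noteq> 0" using t4 fg by auto
  have t4': "t^4 * f = g" using t4 fg by (simp add: field_simps)
  define G2 where "G2 = mat2 t 0 0 (1/t)"
  have "conj_pair (mat2 l 0 0 m) B2 (mat2 l 0 0 m) (mat2 e (t^2*f) (t^2*f) h)"
    unfolding conj_pair_iff
  proof (intro exI conjI)
    show "SL2 G2" unfolding G2_def SL2_def det_mat2 using t0 by simp
    show "G2 ** mat2 l 0 0 m = mat2 l 0 0 m ** G2" unfolding G2_def mat2_mult by (simp add: mult.commute)
    show "G2 ** B2 = mat2 e (t^2*f) (t^2*f) h ** G2" unfolding G2_def B2 mat2_mult mat2_eq_iff
      using t0 t4' by (simp add: field_simps power2_eq_square) (simp add: power4_eq_xxxx algebra_simps)
  qed
  then have cp: "conj_pair A1 A2 (mat2 l 0 0 m) (mat2 e (t^2*f) (t^2*f) h)"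
    using conj_pair_trans cp1 by blast
  show ?thesis
  proof (intro exI conjI)
    have i2: "\<i> * \<i> = -1" by simp
    show "conj_pair A1 A2 (mat2 ((l+m)/2 + \<i> * (-\<i>*(l-m)/2)) 0 0 ((l+m)/2 - \<i> * (-\<i>*(l-m)/2)))
      (mat2 ((e+h)/2 + \<i> * (-\<i>*(e-h)/2)) (\<i> * (-\<i>*t^2*f)) (\<i> * (-\<i>*t^2*f)) ((e+h)/2 - \<i> * (-\<i>*(e-h)/2)))"
      using cp by (simp add: field_simps)
    show "((l+m)/2)\<^sup>2 + (-\<i>*(l-m)/2)\<^sup>2 = 1"
      using G(3) by (simp add: field_simps power2_eq_square)
    show "((e+h)/2)\<^sup>2 + (-\<i>*(e-h)/2)\<^sup>2 + (-\<i>*t^2*f)\<^sup>2 = 1"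
      using d2 t4' by (simp add: field_simps power2_eq_square power4_eq_xxxx)
    have dd: "(-\<i>*t^2*f)\<^sup>2 = -(f*g)"
      using t4' by (simp add: field_simps power2_eq_square power4_eq_xxxx)
    show "(-\<i>*t^2*f)\<^sup>2 = sigma12 A1 A2 / (2 * nu A1)"
      unfolding dd sig nu1 using G(4) by (simp add: field_simps)
    show "(-\<i>*t^2*f)\<^sup>2 \<noteq> 0" unfolding dd using fg by simp
  qed
qed


lemma canon:
  assumes "SL2 A1" "SL2 A2" "sigma12 A1 A2 \<noteq> 0" "nu A1 = 0" "nu A2 = 0"
  shows "\<exists>s1 s2 w. s1^2 = 1 \<and> s2^2 = 1 \<and> w^2 = sigma12 A1 A2 \<and>
           conj_pair A1 A2 (mat2 s1 1 0 s1) (mat2 s2 0 w s2)"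
proof -
  obtain a b c d where A: "A1 = mat2 a b c d" using mat2_eta by blast
  obtain e f g h where B: "A2 = mat2 e f g h" using mat2_eta by blast
  have d1: "a*d-b*c=1" using assms A by (simp add: SL2_def det_mat2)
  have d2: "e*h-f*g=1" using assms B by (simp add: SL2_def det_mat2)
  define s1 where "s1 = (a+d)/2"
  define s2 where "s2 = (e+h)/2"
  define p where "p = a - s1"
  define u where "u = e - s2"
  have a: "a = s1 + p" and d: "d = s1 - p" unfolding p_def s1_def by (simp_all add: field_simps)
  have e: "e = s2 + u" and h: "h = s2 - u" unfolding u_def s2_def by (simp_all add: field_simps)
  have s1: "s1^2 = 1" using assms(4) A unfolding s1_def by (simp add: nu_def trace_mat2 field_simps power2_eq_square)
  have s2: "s2^2 = 1" using assms(5) B unfolding s2_def by (simp add: nu_def trace_mat2 field_simps power2_eq_square)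
  have n1: "p*p + b*c = 0" using d1 s1 unfolding a d power2_eq_square by algebra
  have n2: "u*u + f*g = 0" using d2 s2 unfolding e h power2_eq_square by algebra
  define \<tau> where "\<tau> = 2*p*u + b*g + c*f"
  have sig: "sigma12 A1 A2 = \<tau>^2"
    unfolding A B sigma_mat2[OF d1 d2] unfolding a d e h \<tau>_def
    by (simp add: mat2_mult trace_mat2 power2_eq_square) (use s1 s2 n1 n2 in \<open>algebra\<close>)
  have \<tau>: "\<tau> \<noteq> 0" using sig assms(3) by auto
  have key: "\<exists>x y. x*u + y*g = 0 \<and> x*f - y*u = 0 \<and> x*(x*b - y*p) - y*(x*p + y*c) \<noteq> 0"
  proof (cases "g = 0")
    case False
    have "g*(g*b - (-u)*p) - (-u)*(g*p + (-u)*c) = g*\<tau>"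
      unfolding \<tau>_def using n2 by algebra
    moreover have "g*u + (-u)*g = 0" by simp
    moreover have "g*f - (-u)*u = 0" using n2 by (simp add: algebra_simps)
    ultimately have "g*u + (-u)*g = 0 \<and> g*f - (-u)*u = 0 \<and> g*(g*b - (-u)*p) - (-u)*(g*p + (-u)*c) \<noteq> 0"
      using False \<tau> by simp
    then show ?thesis by blast
  next
    case True
    have u0: "u = 0" if "f = 0" using n2 True that by simp
    have f0: "f \<noteq> 0" using True \<tau> u0 unfolding \<tau>_def by auto
    have "u*(u*b - f*p) - f*(u*p + f*c) = -f*\<tau>"
      unfolding \<tau>_def using n2 True by algebra
    moreover have "u*u + f*g = 0" using n2 by simp
    moreover have "u*f - f*u = 0" by simp
    ultimately have "u*u + f*g = 0 \<and> u*f - f*u = 0 \<and> u*(u*b - f*p) - f*(u*p + f*c) \<noteq> 0"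
      using f0 \<tau> by simp
    then show ?thesis by blast
  qed
  then obtain x y where xy: "x*u + y*g = 0" "x*f - y*u = 0" and D0: "x*(x*b - y*p) - y*(x*p + y*c) \<noteq> 0"
    by blast
  define D where "D = x*(x*b - y*p) - y*(x*p + y*c)"
  define k where "k = csqrt (1/D)"
  have k2: "k*k*D = 1" unfolding k_def using D0 D_def
    by (metis power2_csqrt power2_eq_square divide_self_if times_divide_eq_left mult_1)
  define G where "G = mat2 (k*x) (k*y) (k*(x*p + y*c)) (k*(x*b - y*p))"
  have "conj_pair A1 A2 (mat2 s1 1 0 s1) (mat2 s2 0 \<tau> s2)"
    unfolding conj_pair_iff
  proof (intro exI conjI)
    show "SL2 G" unfolding G_def SL2_def det_mat2 using k2 unfolding D_def by algebra
    show "G ** A1 = mat2 s1 1 0 s1 ** G"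
      unfolding G_def A a d mat2_mult by (rule mat2_eqI; insert n1; (algebra | simp add: algebra_simps))
    show "G ** A2 = mat2 s2 0 \<tau> s2 ** G"
      unfolding G_def B e h mat2_mult \<tau>_def by (rule mat2_eqI; insert n1 n2 xy; (algebra | simp add: algebra_simps))
  qed
  moreover have "\<tau>^2 = sigma12 A1 A2" using sig by simp
  ultimately show ?thesis using s1 s2 by blast
qed

lemma target:
  assumes "w \<noteq> 0"
  shows "\<exists>lam. lam^2 = -w/4 \<and> conj_pair (mat2 s1 1 0 s1) (mat2 s2 0 w s2)
     (mat2 (s1 + lam) (\<i> * lam) (\<i> * lam) (s1 - lam))
     (mat2 (s2 - lam) (\<i> * lam) (\<i> * lam) (s2 + lam))"
proof -
  define lam where "lam = csqrt (-w/4)"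
  have l2: "lam*lam = -w/4" unfolding lam_def by (metis power2_csqrt power2_eq_square)
  have l0: "lam \<noteq> 0" using l2 assms by auto
  define \<beta> where "\<beta> = csqrt (1/(4*\<i>*lam))"
  have b2: "4*\<i>*lam*(\<beta>*\<beta>) = 1" unfolding \<beta>_def using l0
    by (metis power2_csqrt power2_eq_square divide_self_if times_divide_eq_left mult_1 mult_eq_0_iff
        complex_i_not_zero zero_neq_numeral mult.commute)
  have w: "w = -4*(lam*lam)" using l2 by simp
  define G where "G = mat2 (2*lam*\<beta>*\<i>) (\<beta>*\<i>) (-2*lam*\<beta>) \<beta>"
  have "conj_pair (mat2 s1 1 0 s1) (mat2 s2 0 w s2)
     (mat2 (s1 + lam) (\<i> * lam) (\<i> * lam) (s1 - lam))
     (mat2 (s2 - lam) (\<i> * lam) (\<i> * lam) (s2 + lam))"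
    unfolding conj_pair_iff
  proof (intro exI conjI)
    have i2: "\<i>*\<i> = -1" by simp
    show "SL2 G" unfolding G_def SL2_def det_mat2 using b2 i2 by algebra
    show "G ** mat2 s1 1 0 s1 = mat2 (s1 + lam) (\<i> * lam) (\<i> * lam) (s1 - lam) ** G"
      unfolding G_def mat2_mult mat2_eq_iff by (simp add: algebra_simps)
    show "G ** mat2 s2 0 w s2 = mat2 (s2 - lam) (\<i> * lam) (\<i> * lam) (s2 + lam) ** G"
      unfolding G_def mat2_mult mat2_eq_iff w by (simp add: algebra_simps)
  qed
  then show ?thesis using l2 by (auto simp: power2_eq_square)
qed

theorem proposition5p3:
  fixes A1 A2 :: cmat2
  assumes "SL2 A1" and "SL2 A2" and "sigma12 A1 A2 \<noteq> 0"
  shows "(nu A1 \<noteq> 0 \<longrightarrow>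
          (\<exists>\<alpha>1 \<beta>1 \<alpha>2 \<beta>2 \<delta>2.
             conj_pair A1 A2
               (mat2 (\<alpha>1 + \<i> * \<beta>1) 0 0 (\<alpha>1 - \<i> * \<beta>1))
               (mat2 (\<alpha>2 + \<i> * \<beta>2) (\<i> * \<delta>2) (\<i> * \<delta>2) (\<alpha>2 - \<i> * \<beta>2))
           \<and> \<alpha>1\<^sup>2 + \<beta>1\<^sup>2 = 1 \<and> \<alpha>2\<^sup>2 + \<beta>2\<^sup>2 + \<delta>2\<^sup>2 = 1
           \<and> \<delta>2\<^sup>2 = sigma12 A1 A2 / (2 * nu A1) \<and> \<delta>2\<^sup>2 \<noteq> 0))
       \<and> (nu A1 = 0 \<and> nu A2 \<noteq> 0 \<longrightarrow>
          (\<exists>\<alpha>1 \<beta>1 \<alpha>2 \<beta>2 \<delta>1.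
             conj_pair A1 A2
               (mat2 (\<alpha>1 + \<i> * \<beta>1) (\<i> * \<delta>1) (\<i> * \<delta>1) (\<alpha>1 - \<i> * \<beta>1))
               (mat2 (\<alpha>2 + \<i> * \<beta>2) 0 0 (\<alpha>2 - \<i> * \<beta>2))
           \<and> \<alpha>2\<^sup>2 + \<beta>2\<^sup>2 = 1 \<and> \<alpha>1\<^sup>2 + \<beta>1\<^sup>2 + \<delta>1\<^sup>2 = 1
           \<and> \<delta>1\<^sup>2 = sigma12 A1 A2 / (2 * nu A2) \<and> \<delta>1\<^sup>2 \<noteq> 0))
       \<and> (nu A1 = 0 \<and> nu A2 = 0 \<longrightarrow>
          (\<exists>\<alpha>1 \<alpha>2 lam.
             conj_pair A1 A2
               (mat2 (\<alpha>1 + lam) (\<i> * lam) (\<i> * lam) (\<alpha>1 - lam))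
               (mat2 (\<alpha>2 - lam) (\<i> * lam) (\<i> * lam) (\<alpha>2 + lam))
           \<and> \<alpha>1\<^sup>2 = 1 \<and> \<alpha>2\<^sup>2 = 1
           \<and> lam ^ 4 = sigma12 A1 A2 / 16 \<and> lam ^ 4 \<noteq> 0))"
proof (intro conjI impI)
  assume "nu A1 \<noteq> 0"
  then show "\<exists>\<alpha>1 \<beta>1 \<alpha>2 \<beta>2 \<delta>2.
             conj_pair A1 A2
               (mat2 (\<alpha>1 + \<i> * \<beta>1) 0 0 (\<alpha>1 - \<i> * \<beta>1))
               (mat2 (\<alpha>2 + \<i> * \<beta>2) (\<i> * \<delta>2) (\<i> * \<delta>2) (\<alpha>2 - \<i> * \<beta>2))
           \<and> \<alpha>1\<^sup>2 + \<beta>1\<^sup>2 = 1 \<and> \<alpha>2\<^sup>2 + \<beta>2\<^sup>2 + \<delta>2\<^sup>2 = 1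
           \<and> \<delta>2\<^sup>2 = sigma12 A1 A2 / (2 * nu A1) \<and> \<delta>2\<^sup>2 \<noteq> 0"
    using case1 assms by blast
next
  assume h: "nu A1 = 0 \<and> nu A2 \<noteq> 0"
  have ss: "sigma12 A2 A1 = sigma12 A1 A2" using sigma_sym assms by blast
  have "sigma12 A2 A1 \<noteq> 0" using ss assms by simp
  then obtain \<alpha>1 \<beta>1 \<alpha>2 \<beta>2 \<delta>2 where c:
    "conj_pair A2 A1
               (mat2 (\<alpha>1 + \<i> * \<beta>1) 0 0 (\<alpha>1 - \<i> * \<beta>1))
               (mat2 (\<alpha>2 + \<i> * \<beta>2) (\<i> * \<delta>2) (\<i> * \<delta>2) (\<alpha>2 - \<i> * \<beta>2))"
    "\<alpha>1\<^sup>2 + \<beta>1\<^sup>2 = 1" "\<alpha>2\<^sup>2 + \<beta>2\<^sup>2 + \<delta>2\<^sup>2 = 1"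
    "\<delta>2\<^sup>2 = sigma12 A2 A1 / (2 * nu A2)" "\<delta>2\<^sup>2 \<noteq> 0"
    using case1[OF assms(2,1)] h by blast
  have c1: "conj_pair A1 A2
               (mat2 (\<alpha>2 + \<i> * \<beta>2) (\<i> * \<delta>2) (\<i> * \<delta>2) (\<alpha>2 - \<i> * \<beta>2))
               (mat2 (\<alpha>1 + \<i> * \<beta>1) 0 0 (\<alpha>1 - \<i> * \<beta>1))"
    using c(1) unfolding conj_pair_def by blast
  show "\<exists>\<alpha>1 \<beta>1 \<alpha>2 \<beta>2 \<delta>1.
             conj_pair A1 A2
               (mat2 (\<alpha>1 + \<i> * \<beta>1) (\<i> * \<delta>1) (\<i> * \<delta>1) (\<alpha>1 - \<i> * \<beta>1))
               (mat2 (\<alpha>2 + \<i> * \<beta>2) 0 0 (\<alpha>2 - \<i> * \<beta>2))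
           \<and> \<alpha>2\<^sup>2 + \<beta>2\<^sup>2 = 1 \<and> \<alpha>1\<^sup>2 + \<beta>1\<^sup>2 + \<delta>1\<^sup>2 = 1
           \<and> \<delta>1\<^sup>2 = sigma12 A1 A2 / (2 * nu A2) \<and> \<delta>1\<^sup>2 \<noteq> 0"
    apply (rule exI[of _ \<alpha>2], rule exI[of _ \<beta>2], rule exI[of _ \<alpha>1], rule exI[of _ \<beta>1], rule exI[of _ \<delta>2])
    using c1 c(2,3,4,5) ss by simp
next
  assume h: "nu A1 = 0 \<and> nu A2 = 0"
  obtain s1 s2 w where w: "s1^2 = 1" "s2^2 = 1" "w^2 = sigma12 A1 A2"
    "conj_pair A1 A2 (mat2 s1 1 0 s1) (mat2 s2 0 w s2)"
    using canon[OF assms] h by blast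
  have w0: "w \<noteq> 0" using w(3) assms(3) by auto
  obtain lam where l: "lam^2 = -w/4" "conj_pair (mat2 s1 1 0 s1) (mat2 s2 0 w s2)
     (mat2 (s1 + lam) (\<i> * lam) (\<i> * lam) (s1 - lam))
     (mat2 (s2 - lam) (\<i> * lam) (\<i> * lam) (s2 + lam))"
    using target[OF w0] by blast
  have l4: "lam^4 = sigma12 A1 A2 / 16"
  proof -
    have "lam^4 = (lam^2)^2" by simp
    also have "\<dots> = w^2/16" unfolding l(1) by (simp add: power2_eq_square)
    finally show ?thesis using w(3) by simp
  qed
  show "\<exists>\<alpha>1 \<alpha>2 lam.
             conj_pair A1 A2
               (mat2 (\<alpha>1 + lam) (\<i> * lam) (\<i> * lam) (\<alpha>1 - lam))
               (mat2 (\<alpha>2 - lam) (\<i> * lam) (\<i> * lam) (\<alpha>2 + lam))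
           \<and> \<alpha>1\<^sup>2 = 1 \<and> \<alpha>2\<^sup>2 = 1
           \<and> lam ^ 4 = sigma12 A1 A2 / 16 \<and> lam ^ 4 \<noteq> 0"
    apply (rule exI[of _ s1], rule exI[of _ s2], rule exI[of _ lam])
    using conj_pair_trans[OF w(4) l(2)] w(1,2) l4 assms(3) by (auto simp del: power_eq_0_iff)
qed

end
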